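(* Let $\Gamma$ be an art gallery that is not normal. Then every configuration of guards in $\Gamma$ that visually covers the walls of $\Gamma$ but does not visually cover all of $\Gamma$ has at least three guards.
   Context: An art gallery $\Gamma$ is a simple polygon in the plane (closed region: boundary together with interior), whose boundary (the walls) consists of finitely many line segments. A guard is a point of $\Gamma$; a guard $G$ visually covers $A\in\Gamma$ if the segment $GA$ lies entirely in $\Gamma$. A configuration of guards is a finite set $F$ of points of $\Gamma$; it visually covers $X\subseteq\Gamma$ if each point of $X$ is visually covered by some guard in $F$. $\Gamma$ is normal if every configuration of guards visually covering the walls visually covers all of $\Gamma$. *)

theory Defs
  imports "HOL-Analysis.Analysis"
begin

text \<open>A closed polygonal path is given by
  its list of vertices v0, v1, ..., vn with vn = v0; it is the concatenation of the
  straight segments between consecutive vertices.\<close>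

fun polygonal_path :: "complex list \<Rightarrow> real \<Rightarrow> complex" where
  "polygonal_path [] = linepath 0 0"
| "polygonal_path [a] = linepath a a"
| "polygonal_path [a, b] = linepath a b"
| "polygonal_path (a # b # c # xs) = linepath a b +++ polygonal_path (b # c # xs)"

definition simple_polygon :: "complex list \<Rightarrow> bool" where
  "simple_polygon vs \<longleftrightarrow> length vs \<ge> 4 \<and> hd vs = last vs \<and> simple_path (polygonal_path vs)"

definition walls :: "complex list \<Rightarrow> complex set" where
  "walls vs = path_image (polygonal_path vs)"

definition gallery :: "complex list \<Rightarrow> complex set" where
  "gallery vs = walls vs \<union> inside (walls vs)"

definition visually_covers :: "complex set \<Rightarrow> complex \<Rightarrow> complex \<Rightarrow> bool" where
  "visually_covers \<Gamma> G A \<longleftrightarrow> closed_segment G A \<subseteq> \<Gamma>"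

definition guard_configuration :: "complex set \<Rightarrow> complex set \<Rightarrow> bool" where
  "guard_configuration \<Gamma> F \<longleftrightarrow> finite F \<and> F \<subseteq> \<Gamma>"

definition config_covers :: "complex set \<Rightarrow> complex set \<Rightarrow> complex set \<Rightarrow> bool" where
  "config_covers \<Gamma> F X \<longleftrightarrow> (\<forall>A\<in>X. \<exists>G\<in>F. visually_covers \<Gamma> G A)"

definition normal_gallery :: "complex list \<Rightarrow> bool" where
  "normal_gallery vs \<longleftrightarrow>
     (\<forall>F. guard_configuration (gallery vs) F \<longrightarrow>
          config_covers (gallery vs) F (walls vs) \<longrightarrow>
          config_covers (gallery vs) F (gallery vs))"

end

theory Submission
  imports Defs
begin
lemma seg_line:
  fixes A e :: "'a::real_normed_vector"
  assumes "a \<le> b"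
  shows "closed_segment (A + a *\<^sub>R e) (A + b *\<^sub>R e) = (\<lambda>u. A + u *\<^sub>R e) ` {a..b}"
proof -
  have "closed_segment (A + a *\<^sub>R e) (A + b *\<^sub>R e) = (\<lambda>x. A + x) ` closed_segment (a *\<^sub>R e) (b *\<^sub>R e)"
    by (simp add: closed_segment_translation)
  also have "closed_segment (a *\<^sub>R e) (b *\<^sub>R e) = (\<lambda>u. u *\<^sub>R e) ` closed_segment a b"
    by (metis closed_segment_linear_image linear_scaleR_left)
  finally show ?thesis using assms by (simp add: closed_segment_eq_real_ivl image_image)
qed
lemma exit_pt:
  fixes \<Gamma> :: "'a::real_normed_vector set"
  assumes cl: "closed \<Gamma>" and A: "A \<in> \<Gamma>" and T: "0 \<le> T" and out: "A + T *\<^sub>R d \<notin> \<Gamma>"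
  shows "\<exists>s\<in>{0..T}. (\<forall>u\<in>{0..s}. A + u *\<^sub>R d \<in> \<Gamma>) \<and> A + s *\<^sub>R d \<in> frontier \<Gamma>"
proof -
  define Bad where "Bad = {u\<in>{0..T}. A + u *\<^sub>R d \<notin> \<Gamma>}"
  define s where "s = Inf Bad"
  have TB: "T \<in> Bad" using T out by (simp add: Bad_def)
  have bdd: "bdd_below Bad" unfolding Bad_def by (rule bdd_belowI[of _ 0]) auto
  have s0: "0 \<le> s" unfolding s_def using TB by (intro cInf_greatest) (auto simp: Bad_def)
  have sT: "s \<le> T" unfolding s_def using TB bdd by (intro cInf_lower)
  have low: "A + u *\<^sub>R d \<in> \<Gamma>" if "0 \<le> u" "u < s" for u
  proof (rule ccontr)
    assume "A + u *\<^sub>R d \<notin> \<Gamma>"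
    then have "u \<in> Bad" using that sT by (auto simp: Bad_def)
    then have "s \<le> u" unfolding s_def using bdd by (intro cInf_lower)
    with that show False by simp
  qed
  define P where "P = {u. A + u *\<^sub>R d \<in> \<Gamma>}"
  have "P = (\<lambda>u. A + u *\<^sub>R d) -` \<Gamma>" by (auto simp: P_def)
  moreover have "closed ((\<lambda>u::real. A + u *\<^sub>R d) -` \<Gamma>)"
    by (rule continuous_closed_vimage[OF cl]) (intro continuous_intros)
  ultimately have clP: "closed P" by simp
  have all: "\<forall>u\<in>{0..s}. A + u *\<^sub>R d \<in> \<Gamma>"
  proof (cases "s = 0")
    case True then show ?thesis using A by auto
  next
    case False
    have "{0..<s} \<subseteq> P" using low by (auto simp: P_def)
    then have "closure {0..<s} \<subseteq> P" using clP by (simp add: closure_minimal)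
    then show ?thesis using False s0 by (auto simp: P_def)
  qed
  have fr: "A + s *\<^sub>R d \<in> frontier \<Gamma>"
  proof -
    have inG: "A + s *\<^sub>R d \<in> \<Gamma>" using all s0 by auto
    have "A + s *\<^sub>R d \<notin> interior \<Gamma>"
    proof
      assume "A + s *\<^sub>R d \<in> interior \<Gamma>"
      then obtain e where e: "e > 0" "ball (A + s *\<^sub>R d) e \<subseteq> \<Gamma>"
        using mem_interior by blast
      define \<delta> where "\<delta> = e / (norm d + 1)"
      have dpos: "\<delta> > 0" using e unfolding \<delta>_def by (intro divide_pos_pos) (auto intro: add_nonneg_pos)
      have "Inf Bad < s + \<delta>" using dpos s_def by simp
      then obtain u where u: "u \<in> Bad" "u < s + \<delta>" using TB
        using cInf_lessD[of Bad "s + \<delta>"] by blast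
      have su: "s \<le> u" unfolding s_def using bdd u by (intro cInf_lower)
      have "dist (A + s *\<^sub>R d) (A + u *\<^sub>R d) = (u - s) * norm d"
        using su by (simp add: dist_norm scaleR_diff_left[symmetric] norm_minus_commute)
      also have "\<dots> \<le> \<delta> * norm d" using su u by (intro mult_right_mono) auto
      also have "\<dots> < e"
      proof -
        have eq: "\<delta> * norm d = e * (norm d / (norm d + 1))" by (simp add: \<delta>_def)
        have "norm d / (norm d + 1) < 1"
          by (subst divide_less_eq_1_pos) (auto intro: add_nonneg_pos)
        then have "e * (norm d / (norm d + 1)) < e * 1" using e by (intro mult_strict_left_mono) auto
        then show ?thesis using eq by simp
      qed
      finally have "A + u *\<^sub>R d \<in> \<Gamma>" using e by auto
      then show False using u by (simp add: Bad_def)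
    qed
    then show ?thesis using inG cl by (simp add: frontier_def closure_closed)
  qed
  show ?thesis using all fr s0 sT by auto
qed

lemma triangle_in:
  fixes \<Gamma> :: "complex set"
  assumes bd: "bounded \<Gamma>" and cn: "connected (- \<Gamma>)"
    and s1: "closed_segment a b \<subseteq> \<Gamma>" and s2: "closed_segment b c \<subseteq> \<Gamma>"
    and s3: "closed_segment c a \<subseteq> \<Gamma>"
  shows "convex hull {a,b,c} \<subseteq> \<Gamma>"
proof (rule ccontr)
  assume "\<not> ?thesis"
  then have i1: "- \<Gamma> \<inter> convex hull {a,b,c} \<noteq> {}" by blast
  have "bounded (convex hull {a,b,c})" by (simp add: bounded_convex_hull)
  then have "\<not> (- \<Gamma> \<subseteq> convex hull {a,b,c})"
    using bd by (metis Compl_subset_Compl_iff bounded_Un boolean_algebra.disj_cancel_right not_bounded_UNIV sup.absorb_iff1 sup_commute)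
  then have i2: "- \<Gamma> - convex hull {a,b,c} \<noteq> {}" by blast
  have "- \<Gamma> \<inter> frontier (convex hull {a,b,c}) \<noteq> {}"
    by (rule connected_Int_frontier[OF cn i1 i2])
  moreover have "frontier (convex hull {a,b,c}) \<subseteq> \<Gamma>"
    using s1 s2 s3 by (subst frontier_of_triangle) auto
  ultimately show False by blast
qed

lemma key:
  fixes \<Gamma> C :: "complex set"
  assumes cl: "closed \<Gamma>" and bd: "bounded \<Gamma>" and cn: "connected (- \<Gamma>)"
    and fr: "frontier \<Gamma> \<subseteq> C" and A: "A \<in> \<Gamma>"
    and cov: "\<forall>P\<in>C. closed_segment G1 P \<subseteq> \<Gamma> \<or> closed_segment G2 P \<subseteq> \<Gamma>"
    and n2: "\<not> closed_segment G2 A \<subseteq> \<Gamma>"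
  shows "closed_segment G1 A \<subseteq> \<Gamma>"
proof -
  define e where "e = G2 - A"
  define l where "l = (\<lambda>u::real. A + u *\<^sub>R e)"
  have l0: "l 0 = A" and l1: "l 1 = G2" by (auto simp: l_def e_def)
  have segl: "closed_segment (l a) (l b) = l ` {a..b}" if "a \<le> b" for a b
    unfolding l_def by (rule seg_line[OF that])
  have "\<not> l ` {0..1} \<subseteq> \<Gamma>" using n2 segl[of 0 1] l0 l1 by (simp add: closed_segment_commute)
  then obtain u where u: "u \<in> {0..1}" "l u \<notin> \<Gamma>" by blast
  from exit_pt[OF cl A, of u e] u obtain s where s: "s \<in> {0..u}" "\<forall>v\<in>{0..s}. l v \<in> \<Gamma>" "l s \<in> frontier \<Gamma>"
    by (auto simp: l_def)
  have AG: "A \<noteq> G2" using n2 A by auto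
  obtain r where r: "\<forall>x\<in>\<Gamma>. norm x \<le> r" using bd bounded_iff by blast
  define T where "T = (r + norm A + 1) / norm e"
  have ne: "norm e > 0" using AG by (simp add: e_def)
  have r0: "r \<ge> 0" using r A by (meson norm_ge_zero order_trans)
  have T0: "T \<ge> 0" unfolding T_def using ne r0 by simp
  have n1: "norm (T *\<^sub>R (- e)) \<le> norm (A + T *\<^sub>R (- e)) + norm A"
    using norm_triangle_ineq4[of "A + T *\<^sub>R (- e)" A] by simp
  have n2': "norm (T *\<^sub>R (- e)) = T * norm e" using T0 by simp
  have "norm (A + T *\<^sub>R (- e)) \<ge> T * norm e - norm A" using n1 n2' by linarith
  also have "T * norm e = r + norm A + 1" unfolding T_def using ne by simp
  finally have "A + T *\<^sub>R (- e) \<notin> \<Gamma>" using r by force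
  from exit_pt[OF cl A T0 this] obtain t where t: "t \<in> {0..T}"
    "\<forall>v\<in>{0..t}. A + v *\<^sub>R (- e) \<in> \<Gamma>" "A + t *\<^sub>R (- e) \<in> frontier \<Gamma>" by blast
  have neg: "A + v *\<^sub>R (- e) = l (- v)" for v by (simp add: l_def)
  have t': "\<forall>v\<in>{-t..0}. l v \<in> \<Gamma>"
  proof
    fix v assume "v \<in> {-t..0}"
    then have "-v \<in> {0..t}" by auto
    then have "A + (-v) *\<^sub>R (- e) \<in> \<Gamma>" using t(2) by blast
    then show "l v \<in> \<Gamma>" using neg[of "-v"] by simp
  qed
  have QC: "l s \<in> C" using s fr by auto
  have BC: "l (-t) \<in> C" using t fr neg by auto
  have s01: "0 \<le> s" "s \<le> 1" using s u by auto
  have t0: "0 \<le> t" using t by auto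
  have Q1: "closed_segment G1 (l s) \<subseteq> \<Gamma>"
  proof -
    have "\<not> closed_segment G2 (l s) \<subseteq> \<Gamma>"
    proof
      assume h: "closed_segment G2 (l s) \<subseteq> \<Gamma>"
      have "l ` {s..1} \<subseteq> \<Gamma>" using h segl[of s 1] s01 l1 by (simp add: closed_segment_commute)
      then have "l ` {0..1} \<subseteq> \<Gamma>" using s(2) by fastforce
      then show False using n2 segl[of 0 1] l0 l1 by (simp add: closed_segment_commute)
    qed
    then show ?thesis using cov QC by blast
  qed
  have B1: "closed_segment G1 (l (-t)) \<subseteq> \<Gamma>"
  proof -
    have "\<not> closed_segment G2 (l (-t)) \<subseteq> \<Gamma>"
    proof
      assume h: "closed_segment G2 (l (-t)) \<subseteq> \<Gamma>"
      have "l ` {-t..1} \<subseteq> \<Gamma>" using h segl[of "-t" 1] t0 l1 by (simp add: closed_segment_commute)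
      then have "l ` {0..1} \<subseteq> \<Gamma>" using t0 by fastforce
      then show False using n2 segl[of 0 1] l0 l1 by (simp add: closed_segment_commute)
    qed
    then show ?thesis using cov BC by blast
  qed
  have QB: "closed_segment (l (-t)) (l s) \<subseteq> \<Gamma>"
  proof -
    have "l ` {-t..s} \<subseteq> \<Gamma>"
    proof
      fix x assume "x \<in> l ` {-t..s}"
      then obtain v where v: "v \<in> {-t..s}" "x = l v" by blast
      show "x \<in> \<Gamma>" using v s(2) t' by (cases "v \<le> 0") auto
    qed
    then show ?thesis using segl[of "-t" s] t0 s01 by simp
  qed
  have hull: "convex hull {G1, l (-t), l s} \<subseteq> \<Gamma>"
    by (rule triangle_in[OF bd cn B1 QB]) (simp add: closed_segment_commute Q1)
  have "A \<in> closed_segment (l (-t)) (l s)" using segl[of "-t" s] t0 s01 l0 by force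
  moreover have "closed_segment (l (-t)) (l s) \<subseteq> convex hull {G1, l (-t), l s}"
    by (intro closed_segment_subset convex_convex_hull) (auto intro: hull_inc)
  ultimately have "A \<in> convex hull {G1, l (-t), l s}" by blast
  moreover have "G1 \<in> convex hull {G1, l (-t), l s}" by (simp add: hull_inc)
  ultimately have "closed_segment G1 A \<subseteq> convex hull {G1, l (-t), l s}"
    by (simp add: closed_segment_subset)
  then show ?thesis using hull by blast
qed

lemma polygonal_path_ends:
  "vs \<noteq> [] \<Longrightarrow> pathstart (polygonal_path vs) = hd vs \<and> pathfinish (polygonal_path vs) = last vs"
  by (induction vs rule: polygonal_path.induct) auto

lemma two_elems:
  assumes "finite F" "F \<noteq> {}" "card F \<le> 2"
  shows "\<exists>a b. F = {a, b}"
proof -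
  obtain a where a: "a \<in> F" using assms by blast
  have c: "card (F - {a}) \<le> 1" using assms a by (simp add: card_Diff_singleton)
  show ?thesis
  proof (cases "F - {a} = {}")
    case True then have "F = {a, a}" using a by blast
    then show ?thesis by blast
  next
    case False
    then obtain b where "b \<in> F - {a}" by blast
    moreover have "\<forall>x\<in>F - {a}. \<forall>y\<in>F - {a}. x = y"
      using card_le_Suc0_iff_eq[of "F - {a}"] c assms(1) by simp
    ultimately have "F = {a, b}" using a by blast
    then show ?thesis by blast
  qed
qed

theorem mainTheorem4:
  fixes vs :: "complex list" and F :: "complex set"
  assumes "simple_polygon vs"
    and "\<not> normal_gallery vs"
    and "guard_configuration (gallery vs) F"
    and "config_covers (gallery vs) F (walls vs)"
    and "\<not> config_covers (gallery vs) F (gallery vs)"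
  shows "card F \<ge> 3"
proof (rule ccontr)
  assume "\<not> card F \<ge> 3"
  then have c2: "card F \<le> 2" by simp
  define p where "p = polygonal_path vs"
  define C where "C = walls vs"
  define \<Gamma> where "\<Gamma> = gallery vs"
  have sp: "simple_path p" and len: "length vs \<ge> 4" and hl: "hd vs = last vs"
    using assms(1) by (auto simp: simple_polygon_def p_def)
  have "vs \<noteq> []" using len by auto
  then have closedp: "pathfinish p = pathstart p" using polygonal_path_ends[of vs] hl by (simp add: p_def)
  have C: "C = path_image p" by (simp add: C_def walls_def p_def)
  note J = Jordan_inside_outside[OF sp closedp]
  have pp: "path p" using sp by (simp add: simple_path_imp_path)
  have G: "\<Gamma> = C \<union> inside C" by (simp add: \<Gamma>_def gallery_def C_def)
  have Gc: "- \<Gamma> = outside C" using G by (simp add: union_with_inside)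
  have cl: "closed \<Gamma>" using Gc J C by (metis closed_open double_complement)
  have bd: "bounded \<Gamma>" using G J C pp by (simp add: bounded_Un compact_imp_bounded compact_path_image)
  have cn: "connected (- \<Gamma>)" using Gc J C by simp
  have fr: "frontier \<Gamma> \<subseteq> C"
  proof -
    have "inside C \<subseteq> interior \<Gamma>" using J C G by (simp add: interior_maximal)
    moreover have "closure \<Gamma> = \<Gamma>" using cl by (simp add: closure_closed)
    ultimately show ?thesis unfolding frontier_def using G by blast
  qed
  have finF: "finite F" using assms(3) by (simp add: guard_configuration_def)
  have covC: "\<forall>P\<in>C. \<exists>G\<in>F. closed_segment G P \<subseteq> \<Gamma>"
    using assms(4) by (simp add: config_covers_def visually_covers_def C_def \<Gamma>_def)
  have "C \<noteq> {}" using C by (simp add: path_image_nonempty)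
  then have "F \<noteq> {}" using covC by blast
  then obtain G1 G2 where F: "F = {G1, G2}" using two_elems[OF finF _ c2] by blast
  obtain A where A: "A \<in> \<Gamma>" "\<forall>G\<in>F. \<not> closed_segment G A \<subseteq> \<Gamma>"
    using assms(5) by (auto simp: config_covers_def visually_covers_def \<Gamma>_def)
  have "closed_segment G1 A \<subseteq> \<Gamma>"
    by (rule key[OF cl bd cn fr A(1)]) (use covC F A(2) in auto)
  then show False using A F by auto
qed

end
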